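(* Let $Q$ be a Jordan loop and $x\in Q$. Then for all integers $n\ge 0$: (i) $x^n x^2=x^{n+2}$; (ii) $x^n x^4=x^{n+4}$; (iii) $x^n x^8=x^{n+8}$ whenever $n\not\equiv 3 \pmod 4$; moreover, if $x^3x^8=x^{11}$, then $x^nx^8=x^{n+8}$ for all $n\ge 0$; (iv) for integers $k\ge 1$, $x^n x^{2^k}=x^{n+2^k}$ whenever $n\equiv 2^m \pmod{2^{k-1}}$ for some integer $m$ with $0\le m\le k-1$; (v) for integers $n\ge 1$, $x^{2^n}=(x^{2^{n-1}})^2$.
   Context: A loop is a set $Q$ with a binary operation (juxtaposition) and neutral element $e$ such that for all $a,b$ the equations $ax=b$, $ya=b$ have unique solutions. A Jordan loop is a commutative loop satisfying $x^2(yx)=(x^2y)x$. For $k\ge 0$, $x^k$ denotes the right-associated product $x(x(\cdots(xe)\cdots))$ with $k$ factors $x$ (so $x^0=e$, $x^1=x$). For an element $y$, $y^2=yy$. *)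

theory Defs
  imports Main
begin

definition loop :: "('a \<Rightarrow> 'a \<Rightarrow> 'a) \<Rightarrow> 'a \<Rightarrow> bool" where
  "loop m e \<longleftrightarrow> (\<forall>a. m e a = a \<and> m a e = a)
     \<and> (\<forall>a b. \<exists>!x. m a x = b) \<and> (\<forall>a b. \<exists>!y. m y a = b)"

definition jordan_loop :: "('a \<Rightarrow> 'a \<Rightarrow> 'a) \<Rightarrow> 'a \<Rightarrow> bool" where
  "jordan_loop m e \<longleftrightarrow> loop m e \<and> (\<forall>x y. m x y = m y x)
     \<and> (\<forall>x y. m (m x x) (m y x) = m (m (m x x) y) x)"

definition lpow :: "('a \<Rightarrow> 'a \<Rightarrow> 'a) \<Rightarrow> 'a \<Rightarrow> 'a \<Rightarrow> nat \<Rightarrow> 'a" where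
  "lpow m e x k = (m x ^^ k) e"

end

theory Submission
  imports Defs
begin

definition Pk :: "('a \<Rightarrow> 'a \<Rightarrow> 'a) \<Rightarrow> 'a \<Rightarrow> 'a \<Rightarrow> nat \<Rightarrow> nat \<Rightarrow> bool" where
  "Pk m e x k n \<longleftrightarrow> m (lpow m e x n) (lpow m e x (2^k)) = lpow m e x (n + 2^k)"

definition Gk :: "nat \<Rightarrow> nat \<Rightarrow> bool" where
  "Gk k n \<longleftrightarrow> (\<exists>j. j \<le> k - 1 \<and> n mod 2 ^ (k - 1) = 2 ^ j mod 2 ^ (k - 1))"

lemma lpow_0[simp]: "lpow m e x 0 = e" by (simp add: lpow_def)
lemma lpow_Suc[simp]: "lpow m e x (Suc n) = m x (lpow m e x n)" by (simp add: lpow_def)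

lemma Gdvd: assumes "2^(k-1) dvd (u::nat)" shows "Gk k u"
  unfolding Gk_def using assms by (intro exI[of _ "k-1"]) simp

context
  fixes m :: "'a \<Rightarrow> 'a \<Rightarrow> 'a" and e x :: 'a
  assumes J: "jordan_loop m e"
begin

lemma comm: "m a b = m b a" using J unfolding jordan_loop_def by blast
lemma unitl: "m e a = a" using J unfolding jordan_loop_def loop_def by blast
lemma unitr: "m a e = a" using J unfolding jordan_loop_def loop_def by blast
lemma jor: "m (m a a) (m a y) = m a (m (m a a) y)"
proof -
  have "m (m a a) (m y a) = m (m (m a a) y) a" using J unfolding jordan_loop_def by blast
  thus ?thesis by (metis comm)
qed

lemma jor_iter: "m (m a a) ((m a ^^ i) y) = (m a ^^ i) (m (m a a) y)"
  by (induction i) (simp_all add: jor)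

lemma shift:
  assumes "\<forall>t. Pk m e x j (s + t * 2^j)"
  shows "lpow m e x (s + i * 2^j) = (m (lpow m e x (2^j)) ^^ i) (lpow m e x s)"
proof (induction i)
  case 0 then show ?case by simp
next
  case (Suc i)
  have "lpow m e x (s + Suc i * 2^j) = lpow m e x ((s + i * 2^j) + 2^j)" by (simp add: algebra_simps)
  also have "\<dots> = m (lpow m e x (s + i * 2^j)) (lpow m e x (2^j))"
    using assms unfolding Pk_def by metis
  also have "\<dots> = m (lpow m e x (2^j)) ((m (lpow m e x (2^j)) ^^ i) (lpow m e x s))"
    using Suc by (metis comm)
  finally show ?case by simp
qed

lemma step:
  assumes sq: "m (lpow m e x (2^j)) (lpow m e x (2^j)) = lpow m e x (2^(Suc j))"
    and hyp: "\<forall>u. u mod 2^j = n mod 2^j \<longrightarrow> Pk m e x j u"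
    and base: "Pk m e x (Suc j) (n mod 2^j)"
  shows "Pk m e x (Suc j) n"
proof -
  define r where "r = n mod 2^j"
  define q where "q = n div 2^j"
  define A where "A = lpow m e x (2^j)"
  have nq: "n = r + q * 2^j" unfolding r_def q_def by (metis add.commute mod_div_mult_eq)
  have h1: "\<forall>t. Pk m e x j (r + t * 2^j)" using hyp unfolding r_def by simp
  have h2: "\<forall>t. Pk m e x j ((r + 2^(Suc j)) + t * 2^j)"
  proof
    fix t
    have "(r + 2^(Suc j) + t * 2^j) mod 2^j = n mod 2^j"
    proof -
      have "r + 2^(Suc j) + t * 2^j = r + (2+t)*2^j" by (simp add: algebra_simps)
      hence "(r + 2^(Suc j) + t * 2^j) mod 2^j = r mod 2^j" by (simp only: mod_mult_self1)
      thus ?thesis unfolding r_def by simp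
    qed
    thus "Pk m e x j ((r + 2^(Suc j)) + t * 2^j)" using hyp by blast
  qed
  have pn: "lpow m e x n = (m A ^^ q) (lpow m e x r)"
    using shift[OF h1, of q] nq A_def by simp
  have "m (lpow m e x n) (lpow m e x (2^Suc j)) = m (m A A) ((m A ^^ q) (lpow m e x r))"
    using pn sq A_def comm by metis
  also have "\<dots> = (m A ^^ q) (m (m A A) (lpow m e x r))" by (rule jor_iter)
  also have "\<dots> = (m A ^^ q) (lpow m e x (r + 2^Suc j))"
    using base sq A_def comm unfolding Pk_def r_def by metis
  also have "\<dots> = lpow m e x ((r + 2^Suc j) + q * 2^j)"
    using shift[OF h2, of q] A_def by simp
  finally show ?thesis unfolding Pk_def using nq by (simp add: algebra_simps)
qed

lemma mainG: "Gk k n \<Longrightarrow> Pk m e x k n"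
proof (induction k arbitrary: n rule: less_induct)
  case (less k)
  show ?case
  proof (cases k)
    case 0
    then show ?thesis unfolding Pk_def by (simp add: unitr unitl comm)
  next
    case (Suc j)
    have IH: "\<And>i u. i < Suc j \<Longrightarrow> Gk i u \<Longrightarrow> Pk m e x i u" using less.IH Suc by blast
    obtain i where i: "i \<le> j" "n mod 2^j = 2^i mod 2^j" using less.prems Suc unfolding Gk_def by auto
    have sq: "m (lpow m e x (2^j)) (lpow m e x (2^j)) = lpow m e x (2^(Suc j))"
    proof -
      have "Pk m e x j (2^j)" using IH[of j] Gdvd[of j "2^j"]
        by (simp add: le_imp_power_dvd)
      thus ?thesis unfolding Pk_def by (simp add: mult_2)
    qed
    have hyp: "\<forall>u. u mod 2^j = n mod 2^j \<longrightarrow> Pk m e x j u"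
    proof (intro allI impI)
      fix u assume u: "u mod 2^j = n mod 2^j"
      have dv: "(2::nat)^(j-1) dvd 2^j" by (simp add: le_imp_power_dvd)
      have "u mod 2^(j-1) = 2^i mod 2^(j-1)"
        by (metis u i(2) dv mod_mod_cancel)
      hence "Gk j u"
      proof (cases "i \<le> j - 1")
        case True
        then show ?thesis unfolding Gk_def using \<open>u mod 2^(j-1) = 2^i mod 2^(j-1)\<close> by blast
      next
        case False
        hence "i = j" using i by simp
        hence "u mod 2^(j-1) = 0" using \<open>u mod 2^(j-1) = 2^i mod 2^(j-1)\<close> dv by simp
        thus ?thesis unfolding Gk_def by (intro exI[of _ "j-1"]) simp
      qed
      thus "Pk m e x j u" using IH by blast
    qed
    have base: "Pk m e x (Suc j) (n mod 2^j)"
    proof (cases "i = j")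
      case True
      then show ?thesis using i unfolding Pk_def by (simp add: unitl comm)
    next
      case False
      hence ij: "i < j" using i by simp
      hence r: "n mod 2^j = 2^i" using i by simp
      have "Gk i (2^Suc j)" by (rule Gdvd) (use ij in \<open>simp add: le_imp_power_dvd\<close>)
      hence "Pk m e x i (2^Suc j)" using IH ij by simp
      then show ?thesis unfolding Pk_def r by (metis comm add.commute)
    qed
    show ?thesis using step[OF sq hyp base] Suc by simp
  qed
qed

end

theorem lemma2p2:
  fixes m :: "'a \<Rightarrow> 'a \<Rightarrow> 'a" and e x :: 'a
  assumes "jordan_loop m e"
  shows "(\<forall>n. m (lpow m e x n) (lpow m e x 2) = lpow m e x (n + 2))
    \<and> (\<forall>n. m (lpow m e x n) (lpow m e x 4) = lpow m e x (n + 4))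
    \<and> (\<forall>n. n mod 4 \<noteq> 3 \<longrightarrow> m (lpow m e x n) (lpow m e x 8) = lpow m e x (n + 8))
    \<and> (m (lpow m e x 3) (lpow m e x 8) = lpow m e x 11 \<longrightarrow>
         (\<forall>n. m (lpow m e x n) (lpow m e x 8) = lpow m e x (n + 8)))
    \<and> (\<forall>k n. k \<ge> 1 \<longrightarrow> (\<exists>j. j \<le> k - 1 \<and> n mod 2 ^ (k - 1) = 2 ^ j mod 2 ^ (k - 1)) \<longrightarrow>
         m (lpow m e x n) (lpow m e x (2 ^ k)) = lpow m e x (n + 2 ^ k))
    \<and> (\<forall>n. n \<ge> 1 \<longrightarrow> lpow m e x (2 ^ n) = m (lpow m e x (2 ^ (n - 1))) (lpow m e x (2 ^ (n - 1))))"
proof -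
  note G = mainG[OF assms]
  have p1: "\<forall>n. m (lpow m e x n) (lpow m e x 2) = lpow m e x (n + 2)"
  proof
    fix n have "Gk 1 n" unfolding Gk_def by simp
    hence "Pk m e x 1 n" by (rule G)
    thus "m (lpow m e x n) (lpow m e x 2) = lpow m e x (n + 2)" unfolding Pk_def by simp
  qed
  have p2: "\<forall>n. Pk m e x 2 n"
  proof
    fix n :: nat have "Gk 2 n"
    proof (cases "n mod 2 = 0")
      case True thus ?thesis unfolding Gk_def by (intro exI[of _ 1]) simp
    next
      case False hence "n mod 2 = 1" by linarith
      thus ?thesis unfolding Gk_def by (intro exI[of _ 0]) simp
    qed
    thus "Pk m e x 2 n" using G by blast
  qed
  have p3: "\<forall>n. n mod 4 \<noteq> 3 \<longrightarrow> Pk m e x 3 n"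
  proof (intro allI impI)
    fix n :: nat assume "n mod 4 \<noteq> 3"
    moreover have "n mod 4 < 4" by simp
    ultimately have "n mod 4 = 0 \<or> n mod 4 = 1 \<or> n mod 4 = 2" by linarith
    hence "Gk 3 n" unfolding Gk_def
    proof (elim disjE)
      assume "n mod 4 = 0" thus "\<exists>j. j \<le> 3 - 1 \<and> n mod 2 ^ (3 - 1) = 2 ^ j mod 2 ^ (3 - 1)"
        by (intro exI[of _ 2]) simp
    next
      assume "n mod 4 = 1" thus "\<exists>j. j \<le> 3 - 1 \<and> n mod 2 ^ (3 - 1) = 2 ^ j mod 2 ^ (3 - 1)"
        by (intro exI[of _ 0]) simp
    next
      assume "n mod 4 = 2" thus "\<exists>j. j \<le> 3 - 1 \<and> n mod 2 ^ (3 - 1) = 2 ^ j mod 2 ^ (3 - 1)"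
        by (intro exI[of _ 1]) simp
    qed
    thus "Pk m e x 3 n" using G by blast
  qed
  have p3': "m (lpow m e x 3) (lpow m e x 8) = lpow m e x 11 \<longrightarrow> (\<forall>n. Pk m e x 3 n)"
  proof (intro impI allI)
    fix n :: nat assume h: "m (lpow m e x 3) (lpow m e x 8) = lpow m e x 11"
    have sq: "m (lpow m e x (2^2)) (lpow m e x (2^2)) = lpow m e x (2^(Suc 2))"
      using p2 unfolding Pk_def by simp
    have base: "Pk m e x (Suc 2) (n mod 2^2)"
    proof (cases "n mod 4 = 3")
      case True then show ?thesis using h unfolding Pk_def by simp
    next
      case False then show ?thesis using p3 by simp
    qed
    show "Pk m e x 3 n" using step[OF assms sq _ base] p2 by (simp add: numeral_3_eq_3)
  qed
  have p5: "\<forall>k n. k \<ge> 1 \<longrightarrow> (\<exists>j. j \<le> k - 1 \<and> n mod 2 ^ (k - 1) = 2 ^ j mod 2 ^ (k - 1)) \<longrightarrow>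
         m (lpow m e x n) (lpow m e x (2 ^ k)) = lpow m e x (n + 2 ^ k)"
    using G unfolding Gk_def Pk_def by blast
  have p6: "\<forall>n. n \<ge> 1 \<longrightarrow> lpow m e x (2 ^ n) = m (lpow m e x (2 ^ (n - 1))) (lpow m e x (2 ^ (n - 1)))"
  proof (intro allI impI)
    fix n :: nat assume "n \<ge> 1"
    then obtain j where n: "n = Suc j" by (cases n) auto
    have "Gk j (2^j)" by (rule Gdvd) (simp add: le_imp_power_dvd)
    hence "Pk m e x j (2^j)" using G by blast
    thus "lpow m e x (2 ^ n) = m (lpow m e x (2 ^ (n - 1))) (lpow m e x (2 ^ (n - 1)))"
      unfolding Pk_def n by (simp add: mult_2)
  qed
  have q2: "\<forall>n. m (lpow m e x n) (lpow m e x 4) = lpow m e x (n + 4)"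
  proof
    fix n show "m (lpow m e x n) (lpow m e x 4) = lpow m e x (n + 4)"
      using spec[OF p2, of n] unfolding Pk_def by (simp only: power2_eq_square) simp
  qed
  have e8: "(2::nat)^3 = 8" by simp
  have q3: "\<forall>n. n mod 4 \<noteq> 3 \<longrightarrow> m (lpow m e x n) (lpow m e x 8) = lpow m e x (n + 8)"
    using p3 unfolding Pk_def e8 by blast
  have q3': "m (lpow m e x 3) (lpow m e x 8) = lpow m e x 11 \<longrightarrow>
         (\<forall>n. m (lpow m e x n) (lpow m e x 8) = lpow m e x (n + 8))"
    using p3' unfolding Pk_def e8 by blast
  show ?thesis using p1 q2 q3 q3' p5 p6 by (intro conjI)
qed

end
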